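(* Fix $\eta\in\mathcal H_Q$ and an object $(W,\{\alpha_{i,\hbar}(z)\}_{i\in I},\{e^\pm_{i,\hbar}(z)\}_{i\in I})$ of $\mathcal A_\hbar^\eta(Q)$. Let $\varphi(\cdot,z):\mathfrak h\to\mathcal E_\hbar(W)$ be the unique linear map with $\varphi(\alpha_i,z)+\Phi(\eta'(\alpha_i,z),\varphi)=\alpha_{i,\hbar}(z)$ for all $i\in I$. Then for all $i,j\in I$: $$[\varphi(\alpha_i,z_1),\alpha_{j,\hbar}(z_2)]=\langle\alpha_i,\alpha_j\rangle\tfrac{\partial}{\partial z_2}z_1^{-1}\delta\big(\tfrac{z_2}{z_1}\big)+\langle\eta''(\alpha_j,z_2-z_1),\alpha_i\rangle,$$ $$[\varphi(\alpha_i,z_1),e^\pm_{j,\hbar}(z_2)]=\pm\langle\alpha_i,\alpha_j\rangle e^\pm_{j,\hbar}(z_2)z_1^{-1}\delta\big(\tfrac{z_2}{z_1}\big)\pm\langle\eta'(\alpha_j,z_2-z_1),\alpha_i\rangle e^\pm_{j,\hbar}(z_2),$$ $$[\varphi(\alpha_i,z_1),\varphi(\alpha_j,z_2)]=\langle\alpha_i,\alpha_j\rangle\tfrac{\partial}{\partial z_2}z_1^{-1}\delta\big(\tfrac{z_2}{z_1}\big).$$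
   Context: $\hbar$-adic setting: a $\mathbb{C}[[\hbar]]$-module is topologically free if it equals $W_0[[\hbar]]$; for such $W$, $\mathcal E_\hbar(W)=\mathrm{Hom}_{\mathbb C[[\hbar]]}(W,W_0((z))[[\hbar]])$. $Q=\bigoplus_{i\in I}\mathbb Z\alpha_i$ ($I$ finite) is a non-degenerate even lattice, $\mathfrak h=\mathbb C\otimes_{\mathbb Z}Q$ with form $\langle\cdot,\cdot\rangle$. $\mathcal H_Q$ is the set of linear maps $\eta:\mathfrak h\to\mathfrak h\otimes\mathbb C((z))[[\hbar]]$ with $\eta(\alpha_i,z)|_{\hbar=0}\in\mathfrak h\otimes z\mathbb C[[z]]$ and $\eta(\alpha_i,z)^-\in\mathfrak h\otimes\hbar\mathbb C[z^{-1}][[\hbar]]$ for all $i$ ($g^\pm$ = regular/singular part). $\eta'=\partial_z\eta$, $\eta''=\partial_z^2\eta$; $\langle\cdot,\cdot\rangle$ is extended $\mathbb C((z))[[\hbar]]$-bilinearly. $\Phi(h\otimes f(z),\varphi)=\mathrm{Res}_{z_1}\varphi(h,z_1)f(z-z_1)$ ($f(z-z_1)$ expanded in nonnegative powers of $z_1$), extended linearly; the map $\varphi$ in the claim exists uniquely. Convention: a function of $z_1-z_2$ is expanded in nonnegative powers of $z_2$, one of $z_2-z_1$ in nonnegative powers of $z_1$; $\iota_{z_1,z_2}$ denotes expansion in nonnegative powers of $z_2$. The category $\mathcal A_\hbar^\eta(Q)$: objects are topologically free $\mathbb C[[\hbar]]$-modules $W$ with fields $\alpha_{i,\hbar}(z),e^\pm_{i,\hbar}(z)\in\mathcal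 E_\hbar(W)$ ($i\in I$) such that for all $i,j\in I$: (AQ1) $[\alpha_{i,\hbar}(z_1),\alpha_{j,\hbar}(z_2)]=\langle\alpha_i,\alpha_j\rangle\frac{\partial}{\partial z_2}z_1^{-1}\delta(\frac{z_2}{z_1})-\langle\eta''(\alpha_i,z_1-z_2),\alpha_j\rangle+\langle\eta''(\alpha_j,z_2-z_1),\alpha_i\rangle$; (AQ2) $[\alpha_{i,\hbar}(z_1),e^\pm_{j,\hbar}(z_2)]=\pm\langle\alpha_i,\alpha_j\rangle e^\pm_{j,\hbar}(z_2)z_1^{-1}\delta(\frac{z_2}{z_1})\pm\langle\eta'(\alpha_i,z_1-z_2),\alpha_j\rangle e^\pm_{j,\hbar}(z_2)\pm\langle\eta'(\alpha_j,z_2-z_1),\alpha_i\rangle e^\pm_{j,\hbar}(z_2)$; (AQ3) there is $P_{ij}(z)\in\mathbb C((z))[[\hbar]]$ with $\iota_{z_1,z_2}e^{-\langle\eta(\alpha_i,z_1-z_2),\alpha_j\rangle}P_{ij}(z_1-z_2)e^\pm_{i,\hbar}(z_1)e^\pm_{j,\hbar}(z_2)=\iota_{z_2,z_1}e^{-\langle\eta(\alpha_j,z_2-z_1),\alpha_i\rangle}P_{ij}(z_1-z_2)e^\pm_{j,\hbar}(z_2)e^\pm_{i,\hbar}(z_1)$; (AQ4) there is $Q_{ij}(z)\in\mathbb C((z))[[\hbar]]$ with $\iota_{z_1,z_2}e^{\langle\eta(\alpha_i,z_1-z_2),\alpha_j\rangle}Q_{ij}(z_1-z_2)e^\pm_{i,\hbar}(z_1)e^\mp_{j,\hbar}(z_2)=\iota_{z_2,z_1}e^{\langle\eta(\alpha_j,z_2-z_1),\alpha_i\rangle}Q_{ij}(z_1-z_2)e^\mp_{j,\hbar}(z_2)e^\pm_{i,\hbar}(z_1)$;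 (AQ5) $\frac{d}{dz}e^\pm_{i,\hbar}(z)=\pm\alpha_{i,\hbar}(z)^+e^\pm_{i,\hbar}(z)\pm e^\pm_{i,\hbar}(z)\alpha_{i,\hbar}(z)^--\langle\eta'(\alpha_i,0)^+,\alpha_i\rangle e^\pm_{i,\hbar}(z)$, where $\eta'(\alpha_i,0)^+$ is the regular part evaluated at $z=0$; (AQ6) $\iota_{z_1,z_2}e^{\langle\eta(\alpha_i,z_1-z_2),\alpha_i\rangle}(z_1-z_2)^{\langle\alpha_i,\alpha_i\rangle}e^+_{i,\hbar}(z_1)e^-_{i,\hbar}(z_2)=\iota_{z_2,z_1}e^{\langle\eta(\alpha_i,z_2-z_1),\alpha_i\rangle}(z_1-z_2)^{\langle\alpha_i,\alpha_i\rangle}e^-_{i,\hbar}(z_2)e^+_{i,\hbar}(z_1)$, and $\big(e^{\langle\eta(\alpha_i,z_1-z_2),\alpha_i\rangle}(z_1-z_2)^{\langle\alpha_i,\alpha_i\rangle}e^+_{i,\hbar}(z_1)e^-_{i,\hbar}(z_2)\big)|_{z_1=z_2}=1$. Morphisms are $\mathbb C[[\hbar]]$-linear maps commuting with all the fields. *)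

theory Defs
  imports Complex_Main "HOL-Library.Groups_Big_Fun"
begin

(* Conventions:
   - lser  : element of C((z))[[hbar]], given by coefficients  f k n  of  hbar^k z^n.
   - ser2  : scalar series in hbar, z1, z2, coefficient  S k m n  of hbar^k z1^m z2^n.
   - W = W0[[hbar]] with W0 a complex vector space (type 'w, scalar mult. sc).
   - 'w fld : a field a(z) in E_hbar(W), i.e. a C[[hbar]]-linear map W -> W0((z))[[hbar]],
              represented by its (C-linear) restriction to W0:  a w k n = coefficient of
              hbar^k z^n of a(z)w.  (C[[hbar]]-linear maps out of W0[[hbar]] are determined by
              this restriction.)
   - 'w wser2 : W0-valued series in hbar, z1, z2 (the result of applying an operator-valued
              two-variable series to a vector w0 in W0). *)

type_synonym lser = "nat \<Rightarrow> int \<Rightarrow> complex"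
type_synonym ser2 = "nat \<Rightarrow> int \<Rightarrow> int \<Rightarrow> complex"
type_synonym 'w fld = "'w \<Rightarrow> nat \<Rightarrow> int \<Rightarrow> 'w"
type_synonym 'w wser2 = "nat \<Rightarrow> int \<Rightarrow> int \<Rightarrow> 'w"

definition is_lser :: "lser \<Rightarrow> bool" where
  "is_lser f \<longleftrightarrow> (\<forall>k. \<exists>N. \<forall>n<N. f k n = 0)"

definition is_field :: "(complex \<Rightarrow> 'w::ab_group_add \<Rightarrow> 'w) \<Rightarrow> 'w fld \<Rightarrow> bool" where
  "is_field sc a \<longleftrightarrow>
     (\<forall>x y. a (x + y) = (\<lambda>k n. a x k n + a y k n)) \<and>
     (\<forall>c x. a (sc c x) = (\<lambda>k n. sc c (a x k n))) \<and>
     (\<forall>x k. \<exists>N. \<forall>n<N. a x k n = 0)"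

definition lsderiv :: "lser \<Rightarrow> lser" where
  "lsderiv f = (\<lambda>k n. of_int (n + 1) * f k (n + 1))"

definition lsneg :: "lser \<Rightarrow> lser" where
  "lsneg f = (\<lambda>k n. if even n then f k n else - f k n)"

definition lsmono :: "int \<Rightarrow> lser" where
  "lsmono N = (\<lambda>k n. if k = 0 \<and> n = N then 1 else 0)"

definition lsmul :: "lser \<Rightarrow> lser \<Rightarrow> lser" where
  "lsmul f g = (\<lambda>k n. \<Sum>j\<le>k. Sum_any (\<lambda>q. f j q * g (k - j) (n - q)))"

primrec lspow :: "lser \<Rightarrow> nat \<Rightarrow> lser" where
  "lspow g 0 = lsmono 0"
| "lspow g (Suc m) = lsmul g (lspow g m)"

definition lsexp :: "lser \<Rightarrow> lser" where
  "lsexp g = (\<lambda>k n. Sum_any (\<lambda>m::nat. lspow g m k n / of_nat (fact m)))"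

(* <eta(alpha_i, z), alpha_j> = sum_l eta_{il}(z) <alpha_l, alpha_j>,
   where eta(alpha_i,z) = sum_l alpha_l (x) eta i l *)
definition pairing :: "('i::finite \<Rightarrow> 'i \<Rightarrow> int) \<Rightarrow> ('i \<Rightarrow> 'i \<Rightarrow> lser) \<Rightarrow> 'i \<Rightarrow> 'i \<Rightarrow> lser" where
  "pairing G eta i j = (\<lambda>k n. \<Sum>l\<in>UNIV. eta i l k n * of_int (G l j))"

definition etaD :: "('i \<Rightarrow> 'i \<Rightarrow> lser) \<Rightarrow> 'i \<Rightarrow> 'i \<Rightarrow> lser" where
  "etaD eta = (\<lambda>i l. lsderiv (eta i l))"

(* iota_{z1,z2} f(z1 - z2): expansion in nonnegative powers of z2 *)
definition exp12 :: "lser \<Rightarrow> ser2" where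
  "exp12 f = (\<lambda>k m p. if p \<ge> 0
      then f k (m + p) * ((of_int (m + p) :: complex) gchoose (nat p)) * (-1) ^ (nat p) else 0)"

(* f(z2 - z1): expansion in nonnegative powers of z1 *)
definition exp21 :: "lser \<Rightarrow> ser2" where
  "exp21 f = (\<lambda>k m p. if m \<ge> 0
      then f k (m + p) * ((of_int (m + p) :: complex) gchoose (nat m)) * (-1) ^ (nat m) else 0)"

(* z1^{-1} delta(z2/z1) = sum_n z1^{-n-1} z2^n *)
definition delta2 :: ser2 where
  "delta2 = (\<lambda>k m p. if k = 0 \<and> m = - p - 1 then 1 else 0)"

(* d/dz2 z1^{-1} delta(z2/z1) = sum_n n z1^{-n-1} z2^{n-1} *)
definition ddelta2 :: ser2 where
  "ddelta2 = (\<lambda>k m p. if k = 0 \<and> m = - p - 2 then of_int (p + 1) else 0)"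

definition sgnc :: "bool \<Rightarrow> complex" where
  "sgnc s = (if s then 1 else -1)"

(* the identity operator applied to w0, and a field in z2 applied to w0, as 2-variable series *)
definition ident2 :: "'w::zero \<Rightarrow> 'w wser2" where
  "ident2 w0 = (\<lambda>k m n. if k = 0 \<and> m = 0 \<and> n = 0 then w0 else 0)"

definition in2 :: "'w::zero fld \<Rightarrow> 'w \<Rightarrow> 'w wser2" where
  "in2 a w0 = (\<lambda>k m n. if m = 0 then a w0 k n else 0)"

definition smul2 :: "(complex \<Rightarrow> 'w::ab_group_add \<Rightarrow> 'w) \<Rightarrow> ser2 \<Rightarrow> 'w wser2 \<Rightarrow> 'w wser2" where
  "smul2 sc S T = (\<lambda>k m n. \<Sum>j\<le>k.
      Sum_any (\<lambda>(a, b). sc (S j a b) (T (k - j) (m - a) (n - b))))"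

(* a(z1) b(z2) w0  and  b(z2) a(z1) w0 *)
definition pr12 :: "'w::ab_group_add fld \<Rightarrow> 'w fld \<Rightarrow> 'w \<Rightarrow> 'w wser2" where
  "pr12 a b w0 = (\<lambda>k m n. \<Sum>j\<le>k. a (b w0 j n) (k - j) m)"

definition pr21 :: "'w::ab_group_add fld \<Rightarrow> 'w fld \<Rightarrow> 'w \<Rightarrow> 'w wser2" where
  "pr21 b a w0 = (\<lambda>k m n. \<Sum>j\<le>k. b (a w0 j m) (k - j) n)"

definition comm :: "'w::ab_group_add fld \<Rightarrow> 'w fld \<Rightarrow> 'w \<Rightarrow> 'w wser2" where
  "comm a b w0 = (\<lambda>k m n. pr12 a b w0 k m n - pr21 b a w0 k m n)"

definition fplus :: "'w::zero fld \<Rightarrow> 'w fld" where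
  "fplus a = (\<lambda>x k n. if n \<ge> 0 then a x k n else 0)"

definition fminus :: "'w::zero fld \<Rightarrow> 'w fld" where
  "fminus a = (\<lambda>x k n. if n < 0 then a x k n else 0)"

definition fprod1 :: "'w::ab_group_add fld \<Rightarrow> 'w fld \<Rightarrow> 'w \<Rightarrow> nat \<Rightarrow> int \<Rightarrow> 'w" where
  "fprod1 a b w0 = (\<lambda>k m. \<Sum>j\<le>k. Sum_any (\<lambda>p. a (b w0 j p) (k - j) (m - p)))"

definition fderiv :: "(complex \<Rightarrow> 'w \<Rightarrow> 'w) \<Rightarrow> 'w fld \<Rightarrow> 'w fld" where
  "fderiv sc a = (\<lambda>x k n. sc (of_int (n + 1)) (a x k (n + 1)))"

definition hscale :: "(complex \<Rightarrow> 'w::ab_group_add \<Rightarrow> 'w) \<Rightarrow> (nat \<Rightarrow> complex)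
    \<Rightarrow> (nat \<Rightarrow> int \<Rightarrow> 'w) \<Rightarrow> nat \<Rightarrow> int \<Rightarrow> 'w" where
  "hscale sc c v = (\<lambda>k n. \<Sum>j\<le>k. sc (c j) (v (k - j) n))"

(* Phi(h (x) f(z), phi) = Res_{z1} phi(h,z1) f(z - z1), f(z-z1) expanded in nonneg. powers of z1;
   here ph = phi(h, .) and the result is applied to w0 *)
definition Phi :: "(complex \<Rightarrow> 'w::ab_group_add \<Rightarrow> 'w) \<Rightarrow> lser \<Rightarrow> 'w fld \<Rightarrow> 'w \<Rightarrow> nat \<Rightarrow> int \<Rightarrow> 'w" where
  "Phi sc f ph w0 = (\<lambda>k n. \<Sum>j\<le>k. Sum_any (\<lambda>a::nat.
      sc (f j (n + int a) * ((of_int (n + int a) :: complex) gchoose a) * (-1) ^ a)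
         (ph w0 (k - j) (- 1 - int a))))"

(* Q = free Z-module on I with Gram matrix G; non-degenerate even lattice *)
definition even_nondeg_lattice :: "('i::finite \<Rightarrow> 'i \<Rightarrow> int) \<Rightarrow> bool" where
  "even_nondeg_lattice G \<longleftrightarrow>
     (\<forall>i j. G i j = G j i) \<and>
     (\<forall>c :: 'i \<Rightarrow> int. even (\<Sum>i\<in>UNIV. \<Sum>j\<in>UNIV. c i * c j * G i j)) \<and>
     (\<forall>v :: 'i \<Rightarrow> complex. (\<forall>j. (\<Sum>i\<in>UNIV. v i * of_int (G i j)) = 0) \<longrightarrow> v = (\<lambda>_. 0))"

(* eta in H_Q, given by eta(alpha_i, z) = sum_l alpha_l (x) eta i l *)
definition in_HQ :: "('i::finite \<Rightarrow> 'i \<Rightarrow> lser) \<Rightarrow> bool" where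
  "in_HQ eta \<longleftrightarrow> (\<forall>i l. is_lser (eta i l) \<and>
      (\<forall>n \<le> 0. eta i l 0 n = 0) \<and>
      (\<forall>n < 0. eta i l 0 n = 0) \<and> (\<forall>k. finite {n. n < 0 \<and> eta i l k n \<noteq> 0}))"

(* objects of A_hbar^eta(Q); s = True stands for +, s = False for - *)
definition objA :: "(complex \<Rightarrow> 'w::ab_group_add \<Rightarrow> 'w) \<Rightarrow> ('i::finite \<Rightarrow> 'i \<Rightarrow> int)
    \<Rightarrow> ('i \<Rightarrow> 'i \<Rightarrow> lser) \<Rightarrow> ('i \<Rightarrow> 'w fld) \<Rightarrow> (bool \<Rightarrow> 'i \<Rightarrow> 'w fld) \<Rightarrow> bool" where
  "objA sc G eta alpha e \<longleftrightarrow>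
    (\<forall>i. is_field sc (alpha i)) \<and> (\<forall>s i. is_field sc (e s i)) \<and>
    \<comment> \<open>AQ1\<close>
    (\<forall>i j w0. comm (alpha i) (alpha j) w0 =
       smul2 sc (\<lambda>k m n. of_int (G i j) * ddelta2 k m n
          - exp12 (pairing G (etaD (etaD eta)) i j) k m n
          + exp21 (pairing G (etaD (etaD eta)) j i) k m n) (ident2 w0)) \<and>
    \<comment> \<open>AQ2\<close>
    (\<forall>i j s w0. comm (alpha i) (e s j) w0 =
       smul2 sc (\<lambda>k m n. sgnc s * (of_int (G i j) * delta2 k m n
          + exp12 (pairing G (etaD eta) i j) k m n
          + exp21 (pairing G (etaD eta) j i) k m n)) (in2 (e s j) w0)) \<and>
    \<comment> \<open>AQ3\<close>
    (\<forall>i j s. \<exists>P. is_lser P \<and> (\<forall>w0.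
       smul2 sc (exp12 (lsmul (lsexp (\<lambda>k n. - pairing G eta i j k n)) P)) (pr12 (e s i) (e s j) w0)
     = smul2 sc (exp21 (lsmul (lsexp (\<lambda>k n. - pairing G eta j i k n)) (lsneg P))) (pr21 (e s j) (e s i) w0))) \<and>
    \<comment> \<open>AQ4\<close>
    (\<forall>i j s. \<exists>Q. is_lser Q \<and> (\<forall>w0.
       smul2 sc (exp12 (lsmul (lsexp (pairing G eta i j)) Q)) (pr12 (e s i) (e (\<not> s) j) w0)
     = smul2 sc (exp21 (lsmul (lsexp (pairing G eta j i)) (lsneg Q))) (pr21 (e (\<not> s) j) (e s i) w0))) \<and>
    \<comment> \<open>AQ5\<close>
    (\<forall>s i w0. fderiv sc (e s i) w0 =
       (\<lambda>k n. sc (sgnc s) (fprod1 (fplus (alpha i)) (e s i) w0 k n + fprod1 (e s i) (fminus (alpha i)) w0 k n)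
          - hscale sc (\<lambda>k. pairing G (etaD eta) i i k 0) (e s i w0) k n)) \<and>
    \<comment> \<open>AQ6\<close>
    (\<forall>i. (\<forall>w0.
       smul2 sc (exp12 (lsmul (lsexp (pairing G eta i i)) (lsmono (G i i)))) (pr12 (e True i) (e False i) w0)
     = smul2 sc (exp21 (lsmul (lsexp (pairing G eta i i)) (lsneg (lsmono (G i i))))) (pr21 (e False i) (e True i) w0))
     \<and> (\<forall>w0 k n. Sum_any (\<lambda>a. smul2 sc (exp12 (lsmul (lsexp (pairing G eta i i)) (lsmono (G i i))))
                        (pr12 (e True i) (e False i) w0) k a (n - a))
                = (if k = 0 \<and> n = 0 then w0 else 0)))"

end

theory Submission
  imports Defs
begin

definition cf :: "lser \<Rightarrow> nat \<Rightarrow> int \<Rightarrow> nat \<Rightarrow> complex" where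
  "cf f j m a = f j (m + int a) * ((of_int (m + int a) :: complex) gchoose a) * (-1) ^ a"

definition T1 :: "(complex \<Rightarrow> 'w::ab_group_add \<Rightarrow> 'w) \<Rightarrow> lser \<Rightarrow> 'w wser2 \<Rightarrow> 'w wser2" where
  "T1 sc f D = (\<lambda>k m n. \<Sum>j\<le>k. Sum_any (\<lambda>a::nat. sc (cf f j m a) (D (k - j) (-1 - int a) n)))"

definition T1S :: "lser \<Rightarrow> ser2 \<Rightarrow> ser2" where
  "T1S f S = (\<lambda>k m n. \<Sum>j\<le>k. Sum_any (\<lambda>a::nat. cf f j m a * S (k - j) (-1 - int a) n))"

lemma Phi_cf: "Phi sc f ph w0 k n = (\<Sum>j\<le>k. Sum_any (\<lambda>a. sc (cf f j n a) (ph w0 (k - j) (-1 - int a))))"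
  by (simp add: Phi_def cf_def)

lemma fin_sum_supp:
  fixes g :: "'j \<Rightarrow> 'b \<Rightarrow> 'a::comm_monoid_add"
  assumes "finite J" "\<forall>j\<in>J. finite {a. g j a \<noteq> 0}"
  shows "finite {a. (\<Sum>j\<in>J. g j a) \<noteq> 0}"
  by (rule finite_subset[of _ "\<Union>j\<in>J. {a. g j a \<noteq> 0}"])
     (use assms in \<open>auto elim: sum.not_neutral_contains_not_neutral\<close>)

lemma gchoose_zero:
  assumes "0 \<le> x" "x < int a"
  shows "((of_int x :: complex) gchoose a) = 0"
proof -
  have "(of_int x :: complex) = of_nat (nat x)" using assms by simp
  then have "((of_int x :: complex) gchoose a) = of_nat (nat x choose a)"
    by (simp add: binomial_gbinomial)
  also have "nat x choose a = 0" using assms by (simp add: binomial_eq_0)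
  finally show ?thesis by simp
qed

lemma cf0:
  assumes "\<forall>q<0. f 0 q = 0" "m < 0"
  shows "cf f 0 m a = 0"
proof (cases "m + int a < 0")
  case True then show ?thesis using assms by (simp add: cf_def)
next
  case False
  then have "((of_int (m + int a) :: complex) gchoose a) = 0"
    using assms by (intro gchoose_zero) auto
  then show ?thesis by (simp add: cf_def)
qed

lemma T1S_cong:
  assumes "\<forall>K m' n. m' < 0 \<longrightarrow> S K m' n = S' K m' n"
  shows "T1S f S k m n = T1S f S' k m n"
  unfolding T1S_def using assms by simp

lemma aux_dd:
  assumes "1 - int x = - n" "(of_int n :: complex) + 1 \<noteq> 0"
  shows "x = Suc (nat n)"
proof (cases "x = 0")
  case True
  then have "n = -1" using assms by simp
  then show ?thesis using assms by simp
next
  case False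
  then show ?thesis using assms by linarith
qed

lemma T1S_dd:
  assumes "\<forall>K m' n. m' < 0 \<longrightarrow> S K m' n = c * ddelta2 K m' n"
  shows "T1S f S k m n = - c * exp12 (lsderiv f) k m n"
proof -
  have "T1S f S k m n = T1S f (\<lambda>K m' n. c * ddelta2 K m' n) k m n"
    by (rule T1S_cong) (use assms in auto)
  also have "\<dots> = (\<Sum>j\<le>k. if j = k \<and> 0 \<le> n then cf f k m (Suc (nat n)) * (c * of_int (n + 1)) else 0)"
    unfolding T1S_def
  proof (rule sum.cong[OF refl])
    fix j assume j: "j \<in> {..k}"
    show "Sum_any (\<lambda>a. cf f j m a * (c * ddelta2 (k - j) (- 1 - int a) n))
        = (if j = k \<and> 0 \<le> n then cf f k m (Suc (nat n)) * (c * of_int (n + 1)) else 0)"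
      by (subst Sum_any.expand_superset[of "{Suc (nat n)}"]) (use j in \<open>auto simp: ddelta2_def aux_dd split: if_splits\<close>)
  qed
  also have "\<dots> = (if 0 \<le> n then cf f k m (Suc (nat n)) * (c * of_int (n + 1)) else 0)"
    by (simp add: sum.delta')
  also have "\<dots> = - c * exp12 (lsderiv f) k m n"
  proof (cases "0 \<le> n")
    case False then show ?thesis by (simp add: exp12_def)
  next
    case True
    define N where "N = nat n"
    have nN: "n = int N" using True N_def by simp
    have ab: "of_nat (Suc N) * ((of_int (m + n + 1) :: complex) gchoose Suc N)
        = of_int (m + n + 1) * (of_int (m + n) gchoose N)"
      using gbinomial_absorption[of N "of_int (m + n + 1) :: complex"] by simp
    have "cf f k m (Suc (nat n)) * (c * of_int (n + 1))
        = f k (m + n + 1) * c * (-1) ^ Suc N * (of_nat (Suc N) * ((of_int (m + n + 1) :: complex) gchoose Suc N))"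
      by (simp add: cf_def nN algebra_simps)
    also have "\<dots> = - c * exp12 (lsderiv f) k m n"
      unfolding ab by (simp add: exp12_def lsderiv_def nN algebra_simps)
    finally show ?thesis using True by simp
  qed
  finally show ?thesis .
qed

definition conv :: "(complex \<Rightarrow> 'w::ab_group_add \<Rightarrow> 'w) \<Rightarrow> ser2 \<Rightarrow> (nat \<Rightarrow> int \<Rightarrow> 'w) \<Rightarrow> 'w wser2" where
  "conv sc S v = (\<lambda>k m n. \<Sum>j\<le>k. Sum_any (\<lambda>p. sc (S j m p) (v (k - j) (n - p))))"

lemma SA_pair:
  fixes g :: "'b \<Rightarrow> 'a::comm_monoid_add"
  shows "Sum_any (\<lambda>(a, p). if a = m then g p else 0) = Sum_any g"
proof -
  have supp: "{x. (case x of (a, p) \<Rightarrow> if a = m then g p else 0) \<noteq> 0} = Pair m ` {p. g p \<noteq> 0}"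
    by (auto split: if_splits)
  show ?thesis
  proof (cases "finite {p. g p \<noteq> 0}")
    case True
    then show ?thesis
      by (simp add: Sum_any.expand_set supp, subst sum.reindex) (auto simp: inj_on_def)
  next
    case False
    then have "\<not> finite (Pair m ` {p. g p \<noteq> 0})"
      using finite_imageD inj_on_def by blast
    then show ?thesis using False supp by simp
  qed
qed

lemma SA_nat_int:
  fixes h :: "nat \<Rightarrow> 'a::comm_monoid_add"
  shows "Sum_any (\<lambda>p::int. if 0 \<le> p then h (nat p) else 0) = Sum_any h"
proof -
  have supp: "{p::int. (if 0 \<le> p then h (nat p) else 0) \<noteq> 0} = int ` {a. h a \<noteq> 0}"
    by (auto split: if_splits simp: image_iff) (rule_tac x="nat x" in exI, simp)
  show ?thesis
  proof (cases "finite {a. h a \<noteq> 0}")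
    case True
    then show ?thesis
      by (simp only: Sum_any.expand_set supp sum.reindex[OF inj_on_of_nat]) simp
  next
    case False
    then have "\<not> finite (int ` {a. h a \<noteq> 0})"
      using finite_imageD[of int] by (metis inj_on_of_nat)
    then show ?thesis using False supp by simp
  qed
qed

lemma cf_pairing: "cf (pairing G E i j) k m a = (\<Sum>l\<in>UNIV. cf (E i l) k m a * of_int (G l j))"
  by (simp add: cf_def pairing_def sum_distrib_left sum_distrib_right mult_ac)

lemma exp12_pairing: "exp12 (pairing G E i j) k m n = (\<Sum>l\<in>UNIV. exp12 (E i l) k m n * of_int (G l j))"
  by (simp add: exp12_def pairing_def sum_distrib_left sum_distrib_right mult_ac)

lemma fin_conv:
  assumes "\<forall>p<L. S p = 0" "\<forall>q<N. v q = (0::'w::zero)" "\<And>c. sc c 0 = 0" "\<And>x. sc 0 x = 0"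
  shows "finite {p::int. sc (S p) (v (n - p)) \<noteq> 0}"
proof (rule finite_subset[of _ "{L..n - N}"])
  show "{p. sc (S p) (v (n - p)) \<noteq> 0} \<subseteq> {L..n - N}"
  proof
    fix p assume "p \<in> {p. sc (S p) (v (n - p)) \<noteq> 0}"
    then have "S p \<noteq> 0" "v (n - p) \<noteq> 0" using assms(3,4) by auto
    then have "\<not> p < L" "\<not> n - p < N" using assms by auto
    then show "p \<in> {L..n - N}" by simp
  qed
qed simp

lemma comm_swap: "comm a b w0 k m n = - comm b a w0 k n m"
  by (simp add: comm_def pr12_def pr21_def)

lemma ddelta_swap: "ddelta2 k n m = - ddelta2 k m n"
  by (auto simp: ddelta2_def)

lemma exp21_swap: "exp21 g k n m = exp12 g k m n"
  by (simp add: exp21_def exp12_def add.commute)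

lemma pairing_bound:
  fixes E :: "'i::finite \<Rightarrow> 'i \<Rightarrow> lser"
  assumes "\<forall>a b k. \<exists>N. \<forall>q<N. E a b k q = 0"
  shows "\<exists>N. \<forall>q<N. pairing G E a b k q = 0"
proof -
  have "\<forall>l. \<exists>N. \<forall>q<N. E a l k q = 0" using assms by blast
  then have "\<exists>Nf. \<forall>l. \<forall>q<Nf l. E a l k q = 0" by (rule choice)
  then obtain Nf where Nf: "\<forall>l. \<forall>q<Nf l. E a l k q = 0" by blast
  show ?thesis
  proof (intro exI allI impI)
    fix q assume q: "q < Min (range Nf)"
    have "\<forall>l. q < Nf l" using q Min_le[of "range Nf"] by (meson finite_UNIV finite_imageI less_le_trans rangeI)
    then show "pairing G E a b k q = 0" using Nf by (simp add: pairing_def)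
  qed
qed

lemma tri:
  fixes h :: "nat \<Rightarrow> nat \<Rightarrow> 'a::comm_monoid_add"
  shows "(\<Sum>j\<le>k. \<Sum>j'\<le>k-j. h j j') = (\<Sum>j'\<le>k. \<Sum>j\<le>k-j'. h j j')"
proof -
  have "(\<Sum>j\<le>k. \<Sum>j'\<le>k-j. h j j') = sum (\<lambda>(j,j'). h j j') (SIGMA j:{..k}. {..k-j})"
    by (rule sum.Sigma) auto
  also have "\<dots> = sum (\<lambda>(j',j). h j j') (SIGMA j':{..k}. {..k-j'})"
    by (rule sum.reindex_bij_witness[where i=prod.swap and j=prod.swap]) auto
  also have "\<dots> = (\<Sum>j'\<le>k. \<Sum>j\<le>k-j'. h j j')"
    by (rule sum.Sigma[symmetric]) auto
  finally show ?thesis .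
qed

lemma tri2:
  fixes h :: "nat \<Rightarrow> nat \<Rightarrow> 'a::comm_monoid_add"
  shows "(\<Sum>j\<le>k. \<Sum>j'\<le>j. h j' (j - j')) = (\<Sum>j'\<le>k. \<Sum>J\<le>k-j'. h j' J)"
proof -
  have "(\<Sum>j\<le>k. \<Sum>j'\<le>j. h j' (j - j')) = sum (\<lambda>(j,j'). h j' (j - j')) (SIGMA j:{..k}. {..j})"
    by (rule sum.Sigma) auto
  also have "\<dots> = sum (\<lambda>(j',J). h j' J) (SIGMA j':{..k}. {..k-j'})"
    by (rule sum.reindex_bij_witness[where i="\<lambda>(j',J). (j'+J, j')" and j="\<lambda>(j,j'). (j', j - j')"]) auto
  also have "\<dots> = (\<Sum>j'\<le>k. \<Sum>J\<le>k-j'. h j' J)"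
    by (rule sum.Sigma[symmetric]) auto
  finally show ?thesis .
qed

lemma fin_sub:
  assumes "\<forall>q<N. g q = (0::'a::zero)"
  shows "finite {a::nat. g (n - int a) \<noteq> 0}"
proof (rule finite_subset[of _ "{..nat (n - N)}"])
  show "{a::nat. g (n - int a) \<noteq> 0} \<subseteq> {..nat (n - N)}"
  proof
    fix x assume "x \<in> {a::nat. g (n - int a) \<noteq> 0}"
    then have "\<not> (n - int x < N)" using assms by auto
    then have "int x \<le> n - N" by linarith
    then show "x \<in> {..nat (n - N)}" by simp
  qed
qed auto

lemma SA_sum:
  fixes g :: "'j \<Rightarrow> 'b \<Rightarrow> 'a::comm_monoid_add"
  assumes "finite J" "\<forall>j\<in>J. finite {a. g j a \<noteq> 0}"
  shows "Sum_any (\<lambda>a. \<Sum>j\<in>J. g j a) = (\<Sum>j\<in>J. Sum_any (g j))"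
  using assms
proof (induction J rule: finite_induct)
  case empty then show ?case by simp
next
  case (insert x F)
  have fin: "finite {a. (\<Sum>j\<in>F. g j a) \<noteq> 0}"
    by (rule finite_subset[of _ "\<Union>j\<in>F. {a. g j a \<noteq> 0}"])
       (use insert in \<open>auto elim: sum.not_neutral_contains_not_neutral\<close>)
  have "Sum_any (\<lambda>a. \<Sum>j\<in>insert x F. g j a) = Sum_any (\<lambda>a. g x a + (\<Sum>j\<in>F. g j a))"
    using insert by simp
  also have "\<dots> = Sum_any (g x) + Sum_any (\<lambda>a. \<Sum>j\<in>F. g j a)"
    by (rule Sum_any.distrib) (use insert fin in auto)
  finally show ?case using insert by simp
qed

lemma SA_diff:
  fixes g :: "'b \<Rightarrow> 'a::ab_group_add"
  assumes "finite {a. g a \<noteq> 0}" "finite {a. h a \<noteq> 0}"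
  shows "Sum_any (\<lambda>a. g a - h a) = Sum_any g - Sum_any h"
proof -
  have "Sum_any (\<lambda>a. g a - h a) = sum (\<lambda>a. g a - h a) ({a. g a \<noteq> 0} \<union> {a. h a \<noteq> 0})"
    by (rule Sum_any.expand_superset) (use assms in auto)
  also have "\<dots> = sum g ({a. g a \<noteq> 0} \<union> {a. h a \<noteq> 0}) - sum h ({a. g a \<noteq> 0} \<union> {a. h a \<noteq> 0})"
    by (simp add: sum_subtractf)
  also have "\<dots> = Sum_any g - Sum_any h"
    using assms by (simp add: Sum_any.expand_superset[symmetric])
  finally show ?thesis .
qed

lemma SA_neg:
  fixes g :: "'b \<Rightarrow> 'a::ab_group_add"
  shows "Sum_any (\<lambda>a. - g a) = - Sum_any g"
proof (cases "finite {a. g a \<noteq> 0}")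
  case True
  then show ?thesis using SA_diff[of "\<lambda>_. 0" g] by simp
next
  case False
  then show ?thesis by simp
qed

context
  fixes sc :: "complex \<Rightarrow> 'w::ab_group_add \<Rightarrow> 'w"
  assumes VS: "vector_space sc"
begin

interpretation V: vector_space sc by (rule VS)

lemma SA_scr: "Sum_any (\<lambda>a. sc c (g a)) = sc c (Sum_any g)"
proof (cases "c = 0")
  case True then show ?thesis by simp
next
  case False
  then have e: "{a. sc c (g a) \<noteq> 0} = {a. g a \<noteq> 0}" by simp
  show ?thesis
  proof (cases "finite {a. g a \<noteq> 0}")
    case True
    then show ?thesis
      by (simp add: Sum_any.expand_set e V.scale_sum_right False)
  next
    case False then show ?thesis using e by simp
  qed
qed

lemma SA_scl: "Sum_any (\<lambda>a. sc (x a) w) = sc (Sum_any x) w"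
proof (cases "w = 0")
  case True then show ?thesis by simp
next
  case False
  then have e: "{a. sc (x a) w \<noteq> 0} = {a. x a \<noteq> 0}" by simp
  show ?thesis
  proof (cases "finite {a. x a \<noteq> 0}")
    case True
    then show ?thesis
      by (simp add: Sum_any.expand_set e V.scale_sum_left False)
  next
    case False then show ?thesis using e by simp
  qed
qed


lemma fz: "is_field sc X \<Longrightarrow> X 0 k n = 0"
proof -
  assume F: "is_field sc X"
  have "X (0 + 0) k n = X 0 k n + X 0 k n" using F unfolding is_field_def by metis
  then show ?thesis by simp
qed

lemma fadd: "is_field sc X \<Longrightarrow> X (x + y) k n = X x k n + X y k n"
  unfolding is_field_def by metis

lemma fsc: "is_field sc X \<Longrightarrow> X (sc c x) k n = sc c (X x k n)"
  unfolding is_field_def by metis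

lemma flb: "is_field sc X \<Longrightarrow> \<exists>N. \<forall>n<N. X x k n = 0"
  unfolding is_field_def by metis

lemma fsum: "is_field sc X \<Longrightarrow> finite A \<Longrightarrow> X (sum g A) k n = (\<Sum>a\<in>A. X (g a) k n)"
proof -
  assume F: "is_field sc X" and A: "finite A"
  show ?thesis using A
    by (induction A rule: finite_induct) (auto simp: fz[OF F] fadd[OF F])
qed

lemma fSA:
  assumes F: "is_field sc X" and fin: "finite {a. g a \<noteq> 0}"
  shows "X (Sum_any g) k n = Sum_any (\<lambda>a. X (g a) k n)"
proof -
  have "X (Sum_any g) k n = X (sum g {a. g a \<noteq> 0}) k n" by (simp add: Sum_any.expand_set)
  also have "\<dots> = (\<Sum>a\<in>{a. g a \<noteq> 0}. X (g a) k n)" by (rule fsum[OF F fin])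
  also have "\<dots> = Sum_any (\<lambda>a. X (g a) k n)"
    by (rule Sum_any.expand_superset[symmetric]) (use fin F fz in auto)
  finally show ?thesis .
qed

lemma fneg: "is_field sc X \<Longrightarrow> finite {a::nat. X x k (-1 - int a) \<noteq> 0}"
  using flb[of X x k] fin_sub[of _ "X x k" "-1"] by blast


lemma K1a:
  assumes Fp: "is_field sc ph" and FX: "is_field sc X"
  shows "pr12 (Phi sc f ph) X w0 k m n = T1 sc f (pr12 ph X w0) k m n"
proof -
  have "pr12 (Phi sc f ph) X w0 k m n
      = (\<Sum>j\<le>k. \<Sum>j'\<le>k-j. Sum_any (\<lambda>a. sc (cf f j' m a) (ph (X w0 j n) (k - j' - j) (-1 - int a))))"
    by (simp add: pr12_def Phi_cf diff_commute add.commute)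
  also have "\<dots> = (\<Sum>j'\<le>k. \<Sum>j\<le>k-j'. Sum_any (\<lambda>a. sc (cf f j' m a) (ph (X w0 j n) (k - j' - j) (-1 - int a))))"
    by (rule tri)
  also have "\<dots> = (\<Sum>j'\<le>k. Sum_any (\<lambda>a. \<Sum>j\<le>k-j'. sc (cf f j' m a) (ph (X w0 j n) (k - j' - j) (-1 - int a))))"
  proof (rule sum.cong[OF refl], rule SA_sum[symmetric])
    fix j' show "finite {..k-j'}" by simp
    show "\<forall>j\<in>{..k-j'}. finite {a. sc (cf f j' m a) (ph (X w0 j n) (k - j' - j) (-1 - int a)) \<noteq> 0}"
      by (auto intro: finite_subset[OF _ fneg[OF Fp]])
  qed
  also have "\<dots> = T1 sc f (pr12 ph X w0) k m n"
    by (simp add: T1_def pr12_def V.scale_sum_right)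
  finally show ?thesis .
qed

lemma K1b:
  assumes Fp: "is_field sc ph" and FX: "is_field sc X"
  shows "pr21 X (Phi sc f ph) w0 k m n = T1 sc f (pr21 X ph w0) k m n"
proof -
  let ?h = "\<lambda>j' J. Sum_any (\<lambda>a. sc (cf f j' m a) (X (ph w0 J (-1 - int a)) (k - j' - J) n))"
  have "pr21 X (Phi sc f ph) w0 k m n = (\<Sum>j\<le>k. X (Phi sc f ph w0 j m) (k - j) n)"
    by (simp add: pr21_def)
  also have "\<dots> = (\<Sum>j\<le>k. \<Sum>j'\<le>j. ?h j' (j - j'))"
  proof (rule sum.cong[OF refl])
    fix j assume j: "j \<in> {..k}"
    have "X (Phi sc f ph w0 j m) (k - j) n
       = (\<Sum>j'\<le>j. X (Sum_any (\<lambda>a. sc (cf f j' m a) (ph w0 (j - j') (-1 - int a)))) (k - j) n)"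
      by (simp add: Phi_cf fsum[OF FX])
    also have "\<dots> = (\<Sum>j'\<le>j. ?h j' (j - j'))"
    proof (rule sum.cong[OF refl])
      fix j' assume j': "j' \<in> {..j}"
      have fin: "finite {a. sc (cf f j' m a) (ph w0 (j - j') (-1 - int a)) \<noteq> 0}"
        by (auto intro: finite_subset[OF _ fneg[OF Fp]])
      show "X (Sum_any (\<lambda>a. sc (cf f j' m a) (ph w0 (j - j') (-1 - int a)))) (k - j) n = ?h j' (j - j')"
        using j j' by (simp add: fSA[OF FX fin] fsc[OF FX])
    qed
    finally show "X (Phi sc f ph w0 j m) (k - j) n = (\<Sum>j'\<le>j. ?h j' (j - j'))" .
  qed
  also have "\<dots> = (\<Sum>j'\<le>k. \<Sum>J\<le>k-j'. ?h j' J)"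
    by (rule tri2)
  also have "\<dots> = (\<Sum>j'\<le>k. Sum_any (\<lambda>a. \<Sum>J\<le>k-j'. sc (cf f j' m a) (X (ph w0 J (-1 - int a)) (k - j' - J) n)))"
  proof (rule sum.cong[OF refl], rule SA_sum[symmetric])
    fix j' show "finite {..k-j'}" by simp
    show "\<forall>J\<in>{..k-j'}. finite {a. sc (cf f j' m a) (X (ph w0 J (-1 - int a)) (k - j' - J) n) \<noteq> 0}"
    proof
      fix J
      show "finite {a. sc (cf f j' m a) (X (ph w0 J (-1 - int a)) (k - j' - J) n) \<noteq> 0}"
        by (rule finite_subset[OF _ fneg[OF Fp, of w0 J]]) (auto simp: fz[OF FX])
    qed
  qed
  also have "\<dots> = T1 sc f (pr21 X ph w0) k m n"
    by (simp add: T1_def pr21_def V.scale_sum_right)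
  finally show ?thesis .
qed

lemma T1_diff:
  assumes "\<forall>K n. finite {a::nat. D1 K (-1 - int a) n \<noteq> 0}" "\<forall>K n. finite {a::nat. D2 K (-1 - int a) n \<noteq> 0}"
  shows "T1 sc f (\<lambda>k m n. D1 k m n - D2 k m n) k m n = T1 sc f D1 k m n - T1 sc f D2 k m n"
  unfolding T1_def
  by (simp add: V.scale_right_diff_distrib sum_subtractf[symmetric],
      rule sum.cong[OF refl], rule SA_diff)
     (auto intro: finite_subset[OF _ assms(1)[rule_format]] finite_subset[OF _ assms(2)[rule_format]])

lemma K1:
  assumes Fp: "is_field sc ph" and FX: "is_field sc X"
  shows "comm (Phi sc f ph) X w0 k m n = T1 sc f (comm ph X w0) k m n"
proof -
  have s1: "\<forall>K n. finite {a::nat. pr12 ph X w0 K (-1 - int a) n \<noteq> 0}"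
    unfolding pr12_def by (auto intro!: fin_sum_supp fneg[OF Fp])
  have s2: "\<forall>K n. finite {a::nat. pr21 X ph w0 K (-1 - int a) n \<noteq> 0}"
    unfolding pr21_def
  proof (intro allI fin_sum_supp ballI)
    fix K n j
    show "finite {a. X (ph w0 j (- 1 - int a)) (K - j) n \<noteq> 0}"
      by (rule finite_subset[OF _ fneg[OF Fp, of w0 j]]) (auto simp: fz[OF FX])
  qed simp
  have "comm ph X w0 = (\<lambda>k m n. pr12 ph X w0 k m n - pr21 X ph w0 k m n)"
    by (simp add: comm_def)
  then show ?thesis
    by (simp add: comm_def K1a[OF assms] K1b[OF assms] T1_diff[OF s1 s2])
qed


lemma REL:
  fixes phi :: "'i::finite \<Rightarrow> 'w fld"
  assumes FX: "is_field sc X" and Fphi: "\<forall>l. is_field sc (phi l)"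
    and A: "\<forall>x. a x = (\<lambda>k n. p x k n + (\<Sum>l\<in>UNIV. Phi sc (F l) (phi l) x k n))"
  shows "comm a X w0 k m n = comm p X w0 k m n + (\<Sum>l\<in>UNIV. T1 sc (F l) (comm (phi l) X w0) k m n)"
proof -
  have e1: "pr12 a X w0 k m n = pr12 p X w0 k m n + (\<Sum>l\<in>UNIV. pr12 (Phi sc (F l) (phi l)) X w0 k m n)"
    by (simp add: pr12_def A sum.distrib sum.swap[of _ UNIV])
  have e2: "pr21 X a w0 k m n = pr21 X p w0 k m n + (\<Sum>l\<in>UNIV. pr21 X (Phi sc (F l) (phi l)) w0 k m n)"
    by (simp add: pr21_def A fadd[OF FX] fsum[OF FX] sum.distrib sum.swap[of _ UNIV])
  have "comm a X w0 k m n = comm p X w0 k m n + (\<Sum>l\<in>UNIV. comm (Phi sc (F l) (phi l)) X w0 k m n)"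
    by (simp add: comm_def e1 e2 sum_subtractf)
  also have "\<dots> = comm p X w0 k m n + (\<Sum>l\<in>UNIV. T1 sc (F l) (comm (phi l) X w0) k m n)"
    using K1 Fphi FX by simp
  finally show ?thesis .
qed


lemma T1_cong:
  assumes "\<forall>j\<le>k. \<forall>a. cf f j m a = 0 \<or> D (k - j) (-1 - int a) n = R (k - j) (-1 - int a) n"
  shows "T1 sc f D k m n = T1 sc f R k m n"
  unfolding T1_def
proof (rule sum.cong[OF refl], rule Sum_any.cong)
  fix j a assume "j \<in> {..k}"
  then show "sc (cf f j m a) (D (k - j) (- 1 - int a) n) = sc (cf f j m a) (R (k - j) (- 1 - int a) n)"
    using assms by auto
qed

lemma UNIQ:
  fixes D R :: "'i::finite \<Rightarrow> 'w wser2" and F :: "'i \<Rightarrow> 'i \<Rightarrow> lser"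
  assumes F0: "\<forall>i l q. q < 0 \<longrightarrow> F i l 0 q = 0"
    and E: "\<forall>i k m n. D i k m n + (\<Sum>l\<in>UNIV. T1 sc (F i l) (D l) k m n)
                   = R i k m n + (\<Sum>l\<in>UNIV. T1 sc (F i l) (R l) k m n)"
  shows "D i k m n = R i k m n"
proof (induction k arbitrary: i m n rule: less_induct)
  case (less k)
  have neg: "D i k m n = R i k m n" if m: "m < 0" for i m n
  proof -
    have "T1 sc (F i l) (D l) k m n = T1 sc (F i l) (R l) k m n" for l
    proof (rule T1_cong, intro allI impI)
      fix j a assume j: "j \<le> k"
      show "cf (F i l) j m a = 0 \<or> D l (k - j) (- 1 - int a) n = R l (k - j) (- 1 - int a) n"
      proof (cases "j = 0")
        case True then show ?thesis using cf0[of "F i l" m a] F0 m by auto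
      next
        case False then show ?thesis using less j by auto
      qed
    qed
    then show ?thesis using E[rule_format, of i k m n] by simp
  qed
  have "T1 sc (F i l) (D l) k m n = T1 sc (F i l) (R l) k m n" for l
  proof (rule T1_cong, intro allI impI)
    fix j a assume j: "j \<le> k"
    show "cf (F i l) j m a = 0 \<or> D l (k - j) (- 1 - int a) n = R l (k - j) (- 1 - int a) n"
    proof (cases "j = 0")
      case True then show ?thesis using neg by auto
    next
      case False then show ?thesis using less j by auto
    qed
  qed
  then show ?case using E[rule_format, of i k m n] by simp
qed


lemma smul2_ident2: "smul2 sc S (ident2 w0) k m n = sc (S k m n) w0"
proof -
  have "smul2 sc S (ident2 w0) k m n = (\<Sum>j\<le>k. if j = k then sc (S k m n) w0 else 0)"
    unfolding smul2_def
  proof (rule sum.cong[OF refl])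
    fix j assume j: "j \<in> {..k}"
    show "Sum_any (\<lambda>(a, b). sc (S j a b) (ident2 w0 (k - j) (m - a) (n - b))) = (if j = k then sc (S k m n) w0 else 0)"
      by (subst Sum_any.expand_superset[of "{(m, n)}"]) (use j in \<open>auto simp: ident2_def split: if_splits\<close>)
  qed
  then show ?thesis by (simp add: sum.delta')
qed

lemma T1_lift: "T1 sc f (\<lambda>k m n. sc (S k m n) w) k m n = sc (T1S f S k m n) w"
  by (simp add: T1_def T1S_def SA_scl V.scale_sum_left)


lemma smul2_in2: "smul2 sc S (in2 b w0) k m n = conv sc S (b w0) k m n"
  unfolding smul2_def conv_def
proof (rule sum.cong[OF refl])
  fix j
  have "Sum_any (\<lambda>(a, p). sc (S j a p) (in2 b w0 (k - j) (m - a) (n - p)))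
      = Sum_any (\<lambda>(a, p). if a = m then sc (S j m p) (b w0 (k - j) (n - p)) else 0)"
    by (rule Sum_any.cong) (auto simp: in2_def)
  also have "\<dots> = Sum_any (\<lambda>p. sc (S j m p) (b w0 (k - j) (n - p)))"
    by (rule SA_pair)
  finally show "Sum_any (\<lambda>(a, p). sc (S j a p) (in2 b w0 (k - j) (m - a) (n - p)))
      = Sum_any (\<lambda>p. sc (S j m p) (b w0 (k - j) (n - p)))" .
qed

lemma conv_neg:
  assumes "\<forall>K m' p. m' < 0 \<longrightarrow> S K m' p = c * delta2 K m' p"
  shows "conv sc S v K (-1 - int a) n = sc c (v K (n - int a))"
proof -
  have "conv sc S v K (-1 - int a) n = (\<Sum>j\<le>K. if j = 0 then sc c (v K (n - int a)) else 0)"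
    unfolding conv_def
  proof (rule sum.cong[OF refl])
    fix j assume j: "j \<in> {..K}"
    show "Sum_any (\<lambda>p. sc (S j (-1 - int a) p) (v (K - j) (n - p)))
        = (if j = 0 then sc c (v K (n - int a)) else 0)"
      by (subst Sum_any.expand_superset[of "{int a}"]) (use j assms in \<open>auto simp: delta2_def split: if_splits\<close>)
  qed
  then show ?thesis by (simp add: sum.delta)
qed

lemma T1_conv:
  assumes "\<forall>K m' p. m' < 0 \<longrightarrow> S K m' p = c * delta2 K m' p"
  shows "T1 sc f (conv sc S v) k m n = (\<Sum>j\<le>k. Sum_any (\<lambda>a. sc (cf f j m a * c) (v (k - j) (n - int a))))"
  by (simp add: T1_def conv_neg[OF assms])

lemma conv_add:
  assumes "\<forall>j. finite {p. sc (S1 j m p) (v (k - j) (n - p)) \<noteq> 0}"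
      "\<forall>j. finite {p. sc (S2 j m p) (v (k - j) (n - p)) \<noteq> 0}"
  shows "conv sc (\<lambda>k m n. S1 k m n + S2 k m n) v k m n = conv sc S1 v k m n + conv sc S2 v k m n"
  unfolding conv_def
  by (simp add: V.scale_left_distrib sum.distrib[symmetric], rule sum.cong[OF refl], rule Sum_any.distrib)
     (use assms in auto)

lemma EQ2:
  fixes F :: "'i::finite \<Rightarrow> 'i \<Rightarrow> lser" and G :: "'i \<Rightarrow> 'i \<Rightarrow> int" and s :: bool and j :: 'i
  assumes vb: "\<forall>K. \<exists>N. \<forall>q<N. v K q = 0"
    and Pb: "\<forall>a b k. \<exists>N. \<forall>q<N. pairing G F a b k q = 0"
  defines "S \<equiv> \<lambda>l k m n. sgnc s * (of_int (G l j) * delta2 k m n + exp21 (pairing G F j l) k m n)"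
  shows "conv sc (\<lambda>k m n. sgnc s * (of_int (G i j) * delta2 k m n
          + exp12 (pairing G F i j) k m n + exp21 (pairing G F j i) k m n)) v k m n
       = conv sc (S i) v k m n + (\<Sum>l\<in>UNIV. T1 sc (F i l) (conv sc (S l) v) k m n)"
proof -
  let ?E = "\<lambda>k m n. sgnc s * exp12 (pairing G F i j) k m n"
  have A: "(\<lambda>k m n. sgnc s * (of_int (G i j) * delta2 k m n
          + exp12 (pairing G F i j) k m n + exp21 (pairing G F j i) k m n))
        = (\<lambda>k m n. S i k m n + ?E k m n)"
    by (auto simp: S_def algebra_simps)
  have fS: "\<forall>J. finite {p. sc (S i J m p) (v (k - J) (n - p)) \<noteq> 0}"
  proof
    fix J
    obtain N where N: "\<forall>q<N. v (k - J) q = 0" using vb by blast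
    obtain L where L: "\<forall>q<L. pairing G F j i J q = 0" using Pb by blast
    have "\<forall>p < min (-m-1) (L - m). S i J m p = 0"
      using L by (auto simp: S_def delta2_def exp21_def)
    then show "finite {p. sc (S i J m p) (v (k - J) (n - p)) \<noteq> 0}"
      by (rule fin_conv[OF _ N]) simp_all
  qed
  have fE: "\<forall>J. finite {p. sc (?E J m p) (v (k - J) (n - p)) \<noteq> 0}"
  proof
    fix J
    obtain N where N: "\<forall>q<N. v (k - J) q = 0" using vb by blast
    have "\<forall>p < 0. ?E J m p = 0" by (auto simp: exp12_def)
    then show "finite {p. sc (?E J m p) (v (k - J) (n - p)) \<noteq> 0}"
      by (rule fin_conv[OF _ N]) simp_all
  qed
  have "(\<Sum>l\<in>UNIV. T1 sc (F i l) (conv sc (S l) v) k m n)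
      = (\<Sum>l\<in>UNIV. \<Sum>J\<le>k. Sum_any (\<lambda>a. sc (cf (F i l) J m a * (sgnc s * of_int (G l j))) (v (k - J) (n - int a))))"
  proof (rule sum.cong[OF refl], rule T1_conv)
    fix l show "\<forall>K m' p. m' < 0 \<longrightarrow> S l K m' p = (sgnc s * of_int (G l j)) * delta2 K m' p"
      by (auto simp: S_def exp21_def)
  qed
  also have "\<dots> = (\<Sum>J\<le>k. \<Sum>l\<in>UNIV. Sum_any (\<lambda>a. sc (cf (F i l) J m a * (sgnc s * of_int (G l j))) (v (k - J) (n - int a))))"
    by (rule sum.swap)
  also have "\<dots> = (\<Sum>J\<le>k. Sum_any (\<lambda>a. \<Sum>l\<in>UNIV. sc (cf (F i l) J m a * (sgnc s * of_int (G l j))) (v (k - J) (n - int a))))"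
  proof (rule sum.cong[OF refl], rule SA_sum[symmetric])
    fix J
    obtain N where N: "\<forall>q<N. v (k - J) q = 0" using vb by blast
    show "\<forall>l\<in>UNIV. finite {a. sc (cf (F i l) J m a * (sgnc s * of_int (G l j))) (v (k - J) (n - int a)) \<noteq> 0}"
      by (auto intro: finite_subset[OF _ fin_sub[OF N, of n]])
  qed simp
  also have "\<dots> = (\<Sum>J\<le>k. Sum_any (\<lambda>a. sc (sgnc s * cf (pairing G F i j) J m a) (v (k - J) (n - int a))))"
    by (simp add: V.scale_sum_left[symmetric] cf_pairing sum_distrib_left mult_ac)
  also have "\<dots> = conv sc ?E v k m n"
    unfolding conv_def
  proof (rule sum.cong[OF refl])
    fix J
    have "Sum_any (\<lambda>p. sc (?E J m p) (v (k - J) (n - p)))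
        = Sum_any (\<lambda>p::int. if 0 \<le> p then (\<lambda>a. sc (sgnc s * cf (pairing G F i j) J m a) (v (k - J) (n - int a))) (nat p) else 0)"
      by (rule Sum_any.cong) (simp add: exp12_def cf_def)
    then show "Sum_any (\<lambda>a. sc (sgnc s * cf (pairing G F i j) J m a) (v (k - J) (n - int a)))
        = Sum_any (\<lambda>p. sc (?E J m p) (v (k - J) (n - p)))"
      using SA_nat_int[of "\<lambda>a. sc (sgnc s * cf (pairing G F i j) J m a) (v (k - J) (n - int a))"] by simp
  qed
  finally have B: "(\<Sum>l\<in>UNIV. T1 sc (F i l) (conv sc (S l) v) k m n) = conv sc ?E v k m n" .
  show ?thesis
    unfolding A conv_add[of "S i" m v k n ?E, OF fS fE] B ..
qed


lemma CL1:
  fixes G :: "'i::finite \<Rightarrow> 'i \<Rightarrow> int" and eta :: "'i \<Rightarrow> 'i \<Rightarrow> lser"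
  assumes F0: "\<forall>i l q. q < 0 \<longrightarrow> etaD eta i l 0 q = 0"
    and Fphi: "\<forall>l. is_field sc (phi l)" and Fal: "\<forall>l. is_field sc (alpha l)"
    and A: "\<forall>i x. alpha i x = (\<lambda>k n. phi i x k n + (\<Sum>l\<in>UNIV. Phi sc (etaD eta i l) (phi l) x k n))"
    and AQ1: "\<forall>i j w0. comm (alpha i) (alpha j) w0 =
       smul2 sc (\<lambda>k m n. of_int (G i j) * ddelta2 k m n
          - exp12 (pairing G (etaD (etaD eta)) i j) k m n
          + exp21 (pairing G (etaD (etaD eta)) j i) k m n) (ident2 w0)"
  shows "\<forall>i j w0. comm (phi i) (alpha j) w0 =
            smul2 sc (\<lambda>k m n. of_int (G i j) * ddelta2 k m n
               + exp21 (pairing G (etaD (etaD eta)) j i) k m n) (ident2 w0)"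
proof (intro allI)
  fix i j w0
  define S1 where "S1 = (\<lambda>l k m n. of_int (G l j) * ddelta2 k m n + exp21 (pairing G (etaD (etaD eta)) j l) k m n)"
  define R where "R = (\<lambda>l k m n. sc (S1 l k m n) w0)"
  have T1R: "T1 sc (etaD eta i' l) (R l) k m n = sc (- of_int (G l j) * exp12 (etaD (etaD eta) i' l) k m n) w0" for i' l k m n
  proof -
    have "T1 sc (etaD eta i' l) (R l) k m n = sc (T1S (etaD eta i' l) (S1 l) k m n) w0"
      unfolding R_def by (rule T1_lift)
    also have "T1S (etaD eta i' l) (S1 l) k m n = - of_int (G l j) * exp12 (lsderiv (etaD eta i' l)) k m n"
      by (rule T1S_dd) (auto simp: S1_def exp21_def)
    finally show ?thesis by (simp add: etaD_def)
  qed
  have "comm (phi i') (alpha j) w0 k m n = R i' k m n" for i' k m n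
  proof (rule UNIQ[where F = "etaD eta", OF F0], intro allI)
    fix i k m n
    have "comm (phi i) (alpha j) w0 k m n + (\<Sum>l\<in>UNIV. T1 sc (etaD eta i l) (comm (phi l) (alpha j) w0) k m n)
        = comm (alpha i) (alpha j) w0 k m n"
      by (rule REL[symmetric]) (use Fal Fphi A in auto)
    also have "\<dots> = sc (of_int (G i j) * ddelta2 k m n
          - exp12 (pairing G (etaD (etaD eta)) i j) k m n
          + exp21 (pairing G (etaD (etaD eta)) j i) k m n) w0"
      by (simp add: AQ1 smul2_ident2)
    also have "\<dots> = sc (S1 i k m n + (\<Sum>l\<in>UNIV. - of_int (G l j) * exp12 (etaD (etaD eta) i l) k m n)) w0"
    proof -
      have "(\<Sum>l\<in>UNIV. - of_int (G l j) * exp12 (etaD (etaD eta) i l) k m n)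
          = - exp12 (pairing G (etaD (etaD eta)) i j) k m n"
        by (simp add: exp12_pairing sum_negf[symmetric] mult.commute)
      then show ?thesis by (simp add: S1_def)
    qed
    also have "\<dots> = R i k m n + (\<Sum>l\<in>UNIV. T1 sc (etaD eta i l) (R l) k m n)"
      unfolding T1R by (simp add: R_def V.scale_sum_left V.scale_left_distrib)
    finally show "comm (phi i) (alpha j) w0 k m n + (\<Sum>l\<in>UNIV. T1 sc (etaD eta i l) (comm (phi l) (alpha j) w0) k m n)
        = R i k m n + (\<Sum>l\<in>UNIV. T1 sc (etaD eta i l) (R l) k m n)" .
  qed
  then show "comm (phi i) (alpha j) w0 =
            smul2 sc (\<lambda>k m n. of_int (G i j) * ddelta2 k m n
               + exp21 (pairing G (etaD (etaD eta)) j i) k m n) (ident2 w0)"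
    by (simp add: fun_eq_iff smul2_ident2 R_def S1_def)
qed


lemma CL2:
  fixes G :: "'i::finite \<Rightarrow> 'i \<Rightarrow> int" and eta :: "'i \<Rightarrow> 'i \<Rightarrow> lser"
  assumes F0: "\<forall>i l q. q < 0 \<longrightarrow> etaD eta i l 0 q = 0"
    and Fphi: "\<forall>l. is_field sc (phi l)" and Fe: "\<forall>s l. is_field sc (e s l)"
    and A: "\<forall>i x. alpha i x = (\<lambda>k n. phi i x k n + (\<Sum>l\<in>UNIV. Phi sc (etaD eta i l) (phi l) x k n))"
    and Pb: "\<forall>a b k. \<exists>N. \<forall>q<N. pairing G (etaD eta) a b k q = 0"
    and AQ2: "\<forall>i j s w0. comm (alpha i) (e s j) w0 =
       smul2 sc (\<lambda>k m n. sgnc s * (of_int (G i j) * delta2 k m n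
          + exp12 (pairing G (etaD eta) i j) k m n
          + exp21 (pairing G (etaD eta) j i) k m n)) (in2 (e s j) w0)"
  shows "\<forall>i j s w0. comm (phi i) (e s j) w0 =
            smul2 sc (\<lambda>k m n. sgnc s * (of_int (G i j) * delta2 k m n
               + exp21 (pairing G (etaD eta) j i) k m n)) (in2 (e s j) w0)"
proof (intro allI)
  fix i j s w0
  define v where "v = e s j w0"
  define S where "S = (\<lambda>l k m n. sgnc s * (of_int (G l j) * delta2 k m n + exp21 (pairing G (etaD eta) j l) k m n))"
  define R where "R = (\<lambda>l. conv sc (S l) v)"
  have vb: "\<forall>K. \<exists>N. \<forall>q<N. v K q = 0"
    unfolding v_def using flb Fe by blast
  have "comm (phi i') (e s j) w0 k m n = R i' k m n" for i' k m n
  proof (rule UNIQ[where F = "etaD eta", OF F0], intro allI)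
    fix i k m n
    have "comm (phi i) (e s j) w0 k m n + (\<Sum>l\<in>UNIV. T1 sc (etaD eta i l) (comm (phi l) (e s j) w0) k m n)
        = comm (alpha i) (e s j) w0 k m n"
      by (rule REL[symmetric]) (use Fe Fphi A in auto)
    also have "\<dots> = conv sc (\<lambda>k m n. sgnc s * (of_int (G i j) * delta2 k m n
          + exp12 (pairing G (etaD eta) i j) k m n
          + exp21 (pairing G (etaD eta) j i) k m n)) v k m n"
      by (simp add: AQ2 smul2_in2 v_def)
    also have "\<dots> = R i k m n + (\<Sum>l\<in>UNIV. T1 sc (etaD eta i l) (R l) k m n)"
      unfolding R_def S_def by (rule EQ2[OF vb Pb])
    finally show "comm (phi i) (e s j) w0 k m n + (\<Sum>l\<in>UNIV. T1 sc (etaD eta i l) (comm (phi l) (e s j) w0) k m n)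
        = R i k m n + (\<Sum>l\<in>UNIV. T1 sc (etaD eta i l) (R l) k m n)" .
  qed
  then show "comm (phi i) (e s j) w0 =
            smul2 sc (\<lambda>k m n. sgnc s * (of_int (G i j) * delta2 k m n
               + exp21 (pairing G (etaD eta) j i) k m n)) (in2 (e s j) w0)"
    by (simp add: fun_eq_iff smul2_in2 R_def S_def v_def)
qed

lemma CL3:
  fixes G :: "'i::finite \<Rightarrow> 'i \<Rightarrow> int" and eta :: "'i \<Rightarrow> 'i \<Rightarrow> lser"
  assumes sym: "\<forall>a b. G a b = G b a"
    and F0: "\<forall>i l q. q < 0 \<longrightarrow> etaD eta i l 0 q = 0"
    and Fphi: "\<forall>l. is_field sc (phi l)"
    and A: "\<forall>i x. alpha i x = (\<lambda>k n. phi i x k n + (\<Sum>l\<in>UNIV. Phi sc (etaD eta i l) (phi l) x k n))"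
    and C1: "\<forall>i j w0. comm (phi i) (alpha j) w0 =
            smul2 sc (\<lambda>k m n. of_int (G i j) * ddelta2 k m n
               + exp21 (pairing G (etaD (etaD eta)) j i) k m n) (ident2 w0)"
  shows "\<forall>i j w0. comm (phi i) (phi j) w0 =
            smul2 sc (\<lambda>k m n. of_int (G i j) * ddelta2 k m n) (ident2 w0)"
proof (intro allI)
  fix i j w0
  define R where "R = (\<lambda>l k m n. sc (of_int (G l i) * ddelta2 k m n) w0)"
  have T1R: "T1 sc (etaD eta j' l) (R l) k m n = sc (- of_int (G l i) * exp12 (etaD (etaD eta) j' l) k m n) w0" for j' l k m n
  proof -
    have "T1 sc (etaD eta j' l) (R l) k m n = sc (T1S (etaD eta j' l) (\<lambda>k m n. of_int (G l i) * ddelta2 k m n) k m n) w0"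
      unfolding R_def by (rule T1_lift)
    also have "T1S (etaD eta j' l) (\<lambda>k m n. of_int (G l i) * ddelta2 k m n) k m n = - of_int (G l i) * exp12 (lsderiv (etaD eta j' l)) k m n"
      by (rule T1S_dd) auto
    finally show ?thesis by (simp add: etaD_def)
  qed
  have E: "comm (phi j') (phi i) w0 k m n = R j' k m n" for j' k m n
  proof (rule UNIQ[where F = "etaD eta", OF F0], intro allI)
    fix j k m n
    have "comm (phi j) (phi i) w0 k m n + (\<Sum>l\<in>UNIV. T1 sc (etaD eta j l) (comm (phi l) (phi i) w0) k m n)
        = comm (alpha j) (phi i) w0 k m n"
      by (rule REL[symmetric]) (use Fphi A in auto)
    also have "\<dots> = - comm (phi i) (alpha j) w0 k n m"
      by (rule comm_swap)
    also have "\<dots> = - sc (of_int (G i j) * ddelta2 k n m + exp21 (pairing G (etaD (etaD eta)) j i) k n m) w0"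
      by (simp add: C1 smul2_ident2)
    also have "\<dots> = sc (of_int (G j i) * ddelta2 k m n - exp12 (pairing G (etaD (etaD eta)) j i) k m n) w0"
    proof -
      have "of_int (G j i) * ddelta2 k m n - exp12 (pairing G (etaD (etaD eta)) j i) k m n
          = - (of_int (G i j) * ddelta2 k n m + exp21 (pairing G (etaD (etaD eta)) j i) k n m)"
        by (simp add: ddelta_swap[of k n m] exp21_swap sym[rule_format, of i j])
      then show ?thesis by (simp only: V.scale_minus_left)
    qed
    also have "\<dots> = sc (of_int (G j i) * ddelta2 k m n + (\<Sum>l\<in>UNIV. - of_int (G l i) * exp12 (etaD (etaD eta) j l) k m n)) w0"
    proof -
      have "(\<Sum>l\<in>UNIV. - of_int (G l i) * exp12 (etaD (etaD eta) j l) k m n)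
          = - exp12 (pairing G (etaD (etaD eta)) j i) k m n"
        by (simp add: exp12_pairing sum_negf[symmetric] mult.commute)
      then show ?thesis by simp
    qed
    also have "\<dots> = R j k m n + (\<Sum>l\<in>UNIV. T1 sc (etaD eta j l) (R l) k m n)"
      unfolding T1R by (simp add: R_def V.scale_sum_left V.scale_left_distrib)
    finally show "comm (phi j) (phi i) w0 k m n + (\<Sum>l\<in>UNIV. T1 sc (etaD eta j l) (comm (phi l) (phi i) w0) k m n)
        = R j k m n + (\<Sum>l\<in>UNIV. T1 sc (etaD eta j l) (R l) k m n)" .
  qed
  show "comm (phi i) (phi j) w0 = smul2 sc (\<lambda>k m n. of_int (G i j) * ddelta2 k m n) (ident2 w0)"
  proof (intro ext)
    fix k m n
    have "comm (phi i) (phi j) w0 k m n = - comm (phi j) (phi i) w0 k n m" by (rule comm_swap)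
    also have "\<dots> = - R j k n m" by (simp add: E)
    also have "\<dots> = sc (of_int (G i j) * ddelta2 k m n) w0"
    proof -
      have "of_int (G i j) * ddelta2 k m n = - (of_int (G j i) * ddelta2 k n m)"
        by (simp add: ddelta_swap[of k n m] sym[rule_format, of i j])
      then show ?thesis by (simp add: R_def)
    qed
    finally show "comm (phi i) (phi j) w0 k m n = smul2 sc (\<lambda>k m n. of_int (G i j) * ddelta2 k m n) (ident2 w0) k m n"
      by (simp add: smul2_ident2)
  qed
qed

end


theorem lemma5p3:
  fixes sc :: "complex \<Rightarrow> 'w::ab_group_add \<Rightarrow> 'w"
    and G :: "'i::finite \<Rightarrow> 'i \<Rightarrow> int"
    and eta :: "'i \<Rightarrow> 'i \<Rightarrow> lser"
    and alpha :: "'i \<Rightarrow> 'w fld"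
    and e :: "bool \<Rightarrow> 'i \<Rightarrow> 'w fld"
    and phi :: "'i \<Rightarrow> 'w fld"
  assumes "vector_space sc"
    and "even_nondeg_lattice G"
    and "in_HQ eta"
    and "objA sc G eta alpha e"
    and "\<forall>i. is_field sc (phi i)"
    and "\<forall>i w0. (\<lambda>k n. phi i w0 k n + (\<Sum>l\<in>UNIV. Phi sc (lsderiv (eta i l)) (phi l) w0 k n))
               = alpha i w0"
  shows "(\<forall>i j w0. comm (phi i) (alpha j) w0 =
            smul2 sc (\<lambda>k m n. of_int (G i j) * ddelta2 k m n
               + exp21 (pairing G (etaD (etaD eta)) j i) k m n) (ident2 w0))
       \<and> (\<forall>i j s w0. comm (phi i) (e s j) w0 =
            smul2 sc (\<lambda>k m n. sgnc s * (of_int (G i j) * delta2 k m n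
               + exp21 (pairing G (etaD eta) j i) k m n)) (in2 (e s j) w0))
       \<and> (\<forall>i j w0. comm (phi i) (phi j) w0 =
            smul2 sc (\<lambda>k m n. of_int (G i j) * ddelta2 k m n) (ident2 w0))"
proof -
  note VS = assms(1)
  have sym: "\<forall>a b. G a b = G b a" using assms(2) by (simp add: even_nondeg_lattice_def)
  have HQ: "\<forall>i l. is_lser (eta i l) \<and> (\<forall>n \<le> 0. eta i l 0 n = 0)"
    using assms(3) by (simp add: in_HQ_def)
  have F0: "\<forall>i l q. q < 0 \<longrightarrow> etaD eta i l 0 q = 0"
    using HQ by (simp add: etaD_def lsderiv_def)
  have Fphi: "\<forall>l. is_field sc (phi l)" using assms(5) .
  have Fal: "\<forall>l. is_field sc (alpha l)" and Fe: "\<forall>s l. is_field sc (e s l)"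
    using assms(4) by (simp_all add: objA_def)
  have AQ1: "\<forall>i j w0. comm (alpha i) (alpha j) w0 =
       smul2 sc (\<lambda>k m n. of_int (G i j) * ddelta2 k m n
          - exp12 (pairing G (etaD (etaD eta)) i j) k m n
          + exp21 (pairing G (etaD (etaD eta)) j i) k m n) (ident2 w0)"
    using assms(4) by (simp add: objA_def)
  have AQ2: "\<forall>i j s w0. comm (alpha i) (e s j) w0 =
       smul2 sc (\<lambda>k m n. sgnc s * (of_int (G i j) * delta2 k m n
          + exp12 (pairing G (etaD eta) i j) k m n
          + exp21 (pairing G (etaD eta) j i) k m n)) (in2 (e s j) w0)"
    using assms(4) by (simp add: objA_def)
  have A: "\<forall>i x. alpha i x = (\<lambda>k n. phi i x k n + (\<Sum>l\<in>UNIV. Phi sc (etaD eta i l) (phi l) x k n))"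
    using assms(6) by (simp add: etaD_def)
  have Eb: "\<forall>a b k. \<exists>N. \<forall>q<N. etaD eta a b k q = 0"
  proof (intro allI)
    fix a b k
    have "\<exists>N. \<forall>n<N. eta a b k n = 0" using HQ by (simp add: is_lser_def)
    then obtain N where N: "\<forall>n<N. eta a b k n = 0" by blast
    show "\<exists>N. \<forall>q<N. etaD eta a b k q = 0"
      by (rule exI[of _ "N - 1"]) (simp add: etaD_def lsderiv_def N)
  qed
  have Pb: "\<forall>a b k. \<exists>N. \<forall>q<N. pairing G (etaD eta) a b k q = 0"
    using pairing_bound[OF Eb] by blast
  note C1 = CL1[OF VS F0 Fphi Fal A AQ1]
  note C2 = CL2[OF VS F0 Fphi Fe A Pb AQ2]
  note C3 = CL3[OF VS sym F0 Fphi A C1]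
  show ?thesis using C1 C2 C3 by blast
qed

end
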